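(* Let $k\in\{1,2,3\}$. There do not exist smooth vector fields $C$ and $L_n$ ($n\in\mathbb{Z}$) on $\mathbb{R}^k$ with $C$ not identically zero satisfying the Virasoro relations \[ [L_m,L_n]=(m-n)L_{m+n}+\tfrac{1}{12}m(m^2-1)\delta_{m,-n}C,\qquad [L_m,C]=0,\qquad m,n\in\mathbb{Z}. \] That is, there are no realizations of the Virasoro algebra with nonzero central element by vector fields on $\mathbb{R}^k$, $k\le 3$.
   Context: The commutator of vector fields is $[Q,P]=QP-PQ$; $\delta_{a,b}$ is the Kronecker delta. Vector fields on $\mathbb{R}^3$ are first-order operators $\tau\partial_t+\xi\partial_x+\eta\partial_u$ with smooth coefficients in $(t,x,u)$ (analogously with fewer variables for $k<3$). *)

theory Defs
  imports "HOL-Analysis.Analysis"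
begin

fun hdiff :: "('a::real_normed_vector) list \<Rightarrow> ('a \<Rightarrow> 'b::real_normed_vector) \<Rightarrow> 'a \<Rightarrow> 'b" where
  "hdiff [] f = f"
| "hdiff (v # vs) f = (\<lambda>x. frechet_derivative (hdiff vs f) (at x) v)"

definition smooth :: "('a::real_normed_vector \<Rightarrow> 'b::real_normed_vector) \<Rightarrow> bool" where
  "smooth f \<longleftrightarrow> (\<forall>vs x. hdiff vs f differentiable (at x))"

text \<open>Commutator [Q,P] = QP - PQ of vector fields Q, P viewed as first-order operators:
  [Q,P](x) = DP(x)(Q(x)) - DQ(x)(P(x)).\<close>
definition lie_bracket :: "('a::real_normed_vector \<Rightarrow> 'a) \<Rightarrow> ('a \<Rightarrow> 'a) \<Rightarrow> 'a \<Rightarrow> 'a" where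
  "lie_bracket Q P = (\<lambda>x. frechet_derivative P (at x) (Q x) - frechet_derivative Q (at x) (P x))"

end

theory Submission
  imports Defs
begin

lemma nonzero_kernel:
  fixes \<Phi> :: "'a::euclidean_space \<Rightarrow> 'b::euclidean_space"
  assumes "linear \<Phi>" "DIM('b) < DIM('a)"
  shows "\<exists>z. z \<noteq> 0 \<and> \<Phi> z = 0"
proof (rule ccontr)
  assume "\<not> ?thesis"
  then have "inj \<Phi>" using linear_injective_0[OF assms(1)] by auto
  then have "dim (\<Phi> ` UNIV) = dim (UNIV :: 'a set)"
    using dim_image_eq[OF assms(1)] by (metis inj_on_subset subset_UNIV)
  moreover have "dim (\<Phi> ` UNIV) \<le> DIM('b)" by (rule dim_subset_UNIV)
  ultimately show False using assms(2) by (simp add: dim_UNIV)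
qed

lemma smooth_diff: "smooth f \<Longrightarrow> f differentiable (at x)"
  unfolding smooth_def by (metis hdiff.simps(1))

lemma linear_expand:
  fixes f :: "real^'n \<Rightarrow> 'b::real_vector"
  assumes "linear f"
  shows "f w = (\<Sum>l\<in>UNIV. w$l *\<^sub>R f (axis l 1))"
proof -
  have "f w = f (\<Sum>l\<in>UNIV. w$l *\<^sub>R axis l 1)"
    using basis_expansion[of w] by (simp add: scalar_mult_eq_scaleR)
  also have "\<dots> = (\<Sum>l\<in>UNIV. w$l *\<^sub>R f (axis l 1))"
    by (simp add: linear_sum[OF assms] linear_scale[OF assms] o_def)
  finally show ?thesis .
qed

lemma final_arith:
  fixes K N M :: real
  assumes K: "K \<ge> 0" and N: "N \<ge> 504*K + 12" and M: "M \<ge> N"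
    and ineq: "M*(M^2-1)/12 \<le> 7*(2*N+12)*K"
  shows False
proof -
  have N0: "N \<ge> 12" using K N by linarith
  have "M*(M^2-1) - N*(N^2-1) = (M-N)*(M^2+M*N+N^2-1)" by (simp add: power2_eq_square algebra_simps)
  moreover have "M^2+M*N+N^2-1 \<ge> 0"
  proof -
    have "0 \<le> M*N" using N0 M by (intro mult_nonneg_nonneg) auto
    moreover have "N^2 \<ge> 12*N" using N0 by (simp add: power2_eq_square mult_right_mono)
    moreover have "0 \<le> M^2" by simp
    ultimately show ?thesis using N0 by linarith
  qed
  ultimately have "M*(M^2-1) - N*(N^2-1) \<ge> 0" using M by (simp add: mult_nonneg_nonneg)
  then have "M*(M^2-1) \<ge> N*(N^2-1)" by linarith
  then have "N*(N^2-1) \<le> 12*(7*(2*N+12)*K)" using ineq by linarith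
  also have "\<dots> \<le> 12*(21*N*K)"
  proof -
    have "7*(2*N+12) \<le> 21*N" using N0 by simp
    then have "7*(2*N+12)*K \<le> 21*N*K" using K by (rule mult_right_mono)
    then show ?thesis by linarith
  qed
  finally have "N*(N^2-1) \<le> N*(252*K)" by simp
  then have a: "N^2-1 \<le> 252*K" using N0 by (simp add: mult_le_cancel_left)
  have "N^2 \<ge> 12*N" using N0 by (simp add: power2_eq_square mult_right_mono)
  then show False using a N K by linarith
qed

theorem theorem4:
  fixes dummy :: "real ^ 'k"
  assumes "CARD('k) \<le> 3"
  shows "\<not> (\<exists>(C :: real ^ 'k \<Rightarrow> real ^ 'k) (L :: int \<Rightarrow> real ^ 'k \<Rightarrow> real ^ 'k).
            smooth C \<and> (\<forall>n. smooth (L n)) \<and> C \<noteq> (\<lambda>x. 0) \<and>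
            (\<forall>m n. lie_bracket (L m) (L n) =
                 (\<lambda>x. of_int (m - n) *\<^sub>R L (m + n) x
                      + ((if m = - n then 1 else 0) * of_int (m * (m\<^sup>2 - 1)) / 12) *\<^sub>R C x)) \<and>
            (\<forall>m. lie_bracket (L m) C = (\<lambda>x. 0)))"
proof
  assume "\<exists>(C :: real ^ 'k \<Rightarrow> real ^ 'k) (L :: int \<Rightarrow> real ^ 'k \<Rightarrow> real ^ 'k).
            smooth C \<and> (\<forall>n. smooth (L n)) \<and> C \<noteq> (\<lambda>x. 0) \<and>
            (\<forall>m n. lie_bracket (L m) (L n) =
                 (\<lambda>x. of_int (m - n) *\<^sub>R L (m + n) x
                      + ((if m = - n then 1 else 0) * of_int (m * (m\<^sup>2 - 1)) / 12) *\<^sub>R C x)) \<and>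
            (\<forall>m. lie_bracket (L m) C = (\<lambda>x. 0))"
  then obtain C :: "real ^ 'k \<Rightarrow> real ^ 'k" and L :: "int \<Rightarrow> real ^ 'k \<Rightarrow> real ^ 'k"
    where sC: "smooth C" and sL: "\<And>n. smooth (L n)" and C0: "C \<noteq> (\<lambda>x. 0)"
      and vir: "\<And>m n. lie_bracket (L m) (L n) =
                 (\<lambda>x. of_int (m - n) *\<^sub>R L (m + n) x
                      + ((if m = - n then 1 else 0) * of_int (m * (m\<^sup>2 - 1)) / 12) *\<^sub>R C x)"
      and cen: "\<And>m. lie_bracket (L m) C = (\<lambda>x. 0)"
    by blast
  obtain p where cp: "C p \<noteq> 0" using C0 by auto
  define c where "c = C p"
  have cc: "c \<bullet> c \<noteq> 0" using cp c_def by simp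
  define \<theta> where "\<theta> = (\<lambda>w::real^'k. (c \<bullet> w) / (c \<bullet> c))"
  have \<theta>add: "\<And>u v. \<theta> (u + v) = \<theta> u + \<theta> v" unfolding \<theta>_def by (simp add: inner_add_right add_divide_distrib)
  have \<theta>diff: "\<And>u v. \<theta> (u - v) = \<theta> u - \<theta> v" unfolding \<theta>_def by (simp add: inner_diff_right diff_divide_distrib)
  have \<theta>scale: "\<And>a u. \<theta> (a *\<^sub>R u) = a * \<theta> u" unfolding \<theta>_def by simp
  have \<theta>c: "\<theta> c = 1" unfolding \<theta>_def using cc by simp
  have \<theta>0: "\<theta> 0 = 0" unfolding \<theta>_def by simp
  have \<theta>sum: "\<And>(f::'i \<Rightarrow> real^'k) I. \<theta> (\<Sum>i\<in>I. f i) = (\<Sum>i\<in>I. \<theta> (f i))"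
    unfolding \<theta>_def by (simp add: inner_sum_right sum_divide_distrib)
  define D where "D = (\<lambda>f :: real^'k \<Rightarrow> real^'k. frechet_derivative f (at p))"
  have linDL: "\<And>m. linear (D (L m))" unfolding D_def
    by (rule linear_frechet_derivative, rule smooth_diff, rule sL)
  have linDC: "linear (D C)" unfolding D_def
    by (rule linear_frechet_derivative, rule smooth_diff, rule sC)
  have brk: "\<And>Q P. lie_bracket Q P p = D P (Q p) - D Q (P p)"
    unfolding lie_bracket_def D_def by simp
  define \<kappa> where "\<kappa> = (\<lambda>s. \<theta> (L s p))"
  define K where "K = (\<Sum>s\<in>{-6..6::int}. \<bar>\<kappa> s\<bar>)"
  have K0: "K \<ge> 0" unfolding K_def by (simp add: sum_nonneg)
  have Kb: "\<And>s. -6 \<le> s \<Longrightarrow> s \<le> 6 \<Longrightarrow> \<bar>\<kappa> s\<bar> \<le> K"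
    unfolding K_def by (rule member_le_sum) auto
  define n where "n = 504 * \<lceil>K\<rceil> + 12"
  define r where "r = (\<lambda>i::7. Rep_bit1 i)"
  have r_range: "\<And>i. 0 \<le> r i \<and> r i \<le> 6"
  proof -
    fix i :: 7
    have "Rep_bit1 i \<in> {0..<1 + 2 * int CARD(3)}" by (rule Rep_bit1)
    then show "0 \<le> r i \<and> r i \<le> 6" unfolding r_def by simp
  qed
  have r_inj: "\<And>i i'. r i = r i' \<Longrightarrow> i = i'"
    unfolding r_def by (simp add: Rep_bit1_inject)
  define \<Phi> where "\<Phi> = (\<lambda>z::((real^7) \<times> real).
      ((\<Sum>i\<in>UNIV. fst z $ i *\<^sub>R L (n + r i) p) + snd z *\<^sub>R c,
       (\<chi> l. (\<Sum>i\<in>UNIV. fst z $ i * \<theta> (D (L (n + r i)) (axis l 1))) + snd z * \<theta> (D C (axis l 1)))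
       :: real^'k))"
  have "linear \<Phi>"
    unfolding \<Phi>_def
    by (rule linearI)
       (auto simp: vec_eq_iff algebra_simps sum.distrib scaleR_add_left sum_distrib_left scaleR_sum_right)
  moreover have "DIM((real^'k) \<times> (real^'k)) < DIM((real^7) \<times> real)"
    using assms by simp
  ultimately obtain z where z0: "z \<noteq> 0" and \<Phi>z: "\<Phi> z = 0"
    using nonzero_kernel by blast
  obtain b s where zbs: "z = (b, s)" by fastforce
  have Xp: "(\<Sum>i\<in>UNIV. b $ i *\<^sub>R L (n + r i) p) + s *\<^sub>R c = 0"
    using \<Phi>z unfolding \<Phi>_def zbs by (simp add: zero_prod_def)
  have Dl: "\<And>l. (\<Sum>i\<in>UNIV. b $ i * \<theta> (D (L (n + r i)) (axis l 1))) + s * \<theta> (D C (axis l 1)) = 0"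
    using \<Phi>z unfolding \<Phi>_def zbs by (simp add: zero_prod_def vec_eq_iff)
  have bne: "b \<noteq> 0"
  proof
    assume b0: "b = 0"
    then have "s *\<^sub>R c = 0" using Xp by simp
    moreover have "s \<noteq> 0" using z0 zbs b0 by (auto simp: zero_prod_def)
    ultimately show False using cp c_def by simp
  qed
  have key: "\<And>w. (\<Sum>i\<in>UNIV. b $ i * \<theta> (D (L (n + r i)) w)) + s * \<theta> (D C w) = 0"
  proof -
    fix w :: "real^'k"
    have e1: "\<And>m. \<theta> (D (L m) w) = (\<Sum>l\<in>UNIV. w$l * \<theta> (D (L m) (axis l 1)))"
      by (subst linear_expand[OF linDL]) (simp add: \<theta>sum \<theta>scale)
    have e2: "\<theta> (D C w) = (\<Sum>l\<in>UNIV. w$l * \<theta> (D C (axis l 1)))"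
      by (subst linear_expand[OF linDC]) (simp add: \<theta>sum \<theta>scale)
    have "(\<Sum>i\<in>UNIV. b $ i * \<theta> (D (L (n + r i)) w)) + s * \<theta> (D C w)
        = (\<Sum>l\<in>UNIV. w$l * ((\<Sum>i\<in>UNIV. b $ i * \<theta> (D (L (n + r i)) (axis l 1))) + s * \<theta> (D C (axis l 1))))"
    proof -
      have sw: "\<And>T. (\<Sum>i\<in>UNIV. b $ i * (\<Sum>l\<in>UNIV. w$l * T i l)) = (\<Sum>l\<in>UNIV. w$l * (\<Sum>i\<in>UNIV. b $ i * T i l))"
      proof -
        fix T :: "7 \<Rightarrow> 'k \<Rightarrow> real"
        have "(\<Sum>i\<in>UNIV. b $ i * (\<Sum>l\<in>UNIV. w$l * T i l)) = (\<Sum>i\<in>UNIV. \<Sum>l\<in>UNIV. w$l * (b $ i * T i l))"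
          by (simp add: sum_distrib_left mult.left_commute)
        also have "\<dots> = (\<Sum>l\<in>UNIV. \<Sum>i\<in>UNIV. w$l * (b $ i * T i l))" by (rule sum.swap)
        also have "\<dots> = (\<Sum>l\<in>UNIV. w$l * (\<Sum>i\<in>UNIV. b $ i * T i l))" by (simp add: sum_distrib_left)
        finally show "?thesis T" .
      qed
      show ?thesis unfolding e1 e2 sw
        by (simp add: sum_distrib_left distrib_left sum.distrib mult.left_commute)
    qed
    also have "\<dots> = 0" using Dl by simp
    finally show "(\<Sum>i\<in>UNIV. b $ i * \<theta> (D (L (n + r i)) w)) + s * \<theta> (D C w) = 0" .
  qed
  have E: "\<And>j. (\<Sum>i\<in>UNIV. b $ i * \<theta> (lie_bracket (L (n + r i)) (L j) p)) = 0"
  proof -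
    fix j :: int
    define v where "v = L j p"
    have bC: "D (L j) c - D C v = 0"
      using fun_cong[OF cen[of j], of p] unfolding brk v_def c_def by simp
    have "D (L j) ((\<Sum>i\<in>UNIV. b $ i *\<^sub>R L (n + r i) p) + s *\<^sub>R c) = 0"
      using Xp linear_0[OF linDL] by simp
    moreover have "D (L j) ((\<Sum>i\<in>UNIV. b $ i *\<^sub>R L (n + r i) p) + s *\<^sub>R c)
       = (\<Sum>i\<in>UNIV. b $ i *\<^sub>R D (L j) (L (n + r i) p)) + s *\<^sub>R D (L j) c"
      by (simp add: linear_add[OF linDL] linear_sum[OF linDL] linear_scale[OF linDL] o_def)
    ultimately have "\<theta> ((\<Sum>i\<in>UNIV. b $ i *\<^sub>R D (L j) (L (n + r i) p)) + s *\<^sub>R D (L j) c) = 0"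
      using \<theta>0 by simp
    then have s1: "(\<Sum>i\<in>UNIV. b $ i * \<theta> (D (L j) (L (n + r i) p))) + s * \<theta> (D (L j) c) = 0"
      by (simp add: \<theta>add \<theta>sum \<theta>scale)
    have "(\<Sum>i\<in>UNIV. b $ i * \<theta> (lie_bracket (L (n + r i)) (L j) p)) =
          (\<Sum>i\<in>UNIV. b $ i * \<theta> (D (L j) (L (n + r i) p))) - (\<Sum>i\<in>UNIV. b $ i * \<theta> (D (L (n + r i)) v))"
      unfolding brk v_def by (simp add: \<theta>diff right_diff_distrib sum_subtractf)
    also have "\<dots> = - s * \<theta> (D (L j) c) + s * \<theta> (D C v)" using s1 key[of v] by linarith
    also have "\<dots> = - s * \<theta> (D (L j) c - D C v)" by (simp add: \<theta>diff algebra_simps)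
    also have "\<dots> = 0" using bC \<theta>0 by simp
    finally show "(\<Sum>i\<in>UNIV. b $ i * \<theta> (lie_bracket (L (n + r i)) (L j) p)) = 0" .
  qed
  have bL: "\<And>m j. \<theta> (lie_bracket (L m) (L j) p) = of_int (m - j) * \<kappa> (m + j)
                 + (if m = - j then 1 else 0) * of_int (m * (m\<^sup>2 - 1)) / 12"
    by (simp add: vir \<theta>add \<theta>scale \<theta>c \<kappa>_def flip: c_def)
  obtain i0 where i0: "\<And>i. \<bar>b $ i\<bar> \<le> \<bar>b $ i0\<bar>"
  proof -
    have fin: "finite (range (\<lambda>i. \<bar>b $ i\<bar>))" by simp
    have "Max (range (\<lambda>i. \<bar>b $ i\<bar>)) \<in> range (\<lambda>i. \<bar>b $ i\<bar>)"
      by (rule Max_in[OF fin]) simp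
    then obtain i0 where i0: "\<bar>b $ i0\<bar> = Max (range (\<lambda>i. \<bar>b $ i\<bar>))" by (metis (no_types, lifting) imageE)
    show ?thesis
      by (rule that[of i0]) (simp add: i0 fin)
  qed
  have bpos: "\<bar>b $ i0\<bar> > 0"
  proof (rule ccontr)
    assume "\<not> ?thesis"
    then have "\<And>i. b $ i = 0" using i0 by (metis abs_ge_zero abs_le_zero_iff linorder_not_less order_trans)
    then have "b = 0" by (simp add: vec_eq_iff)
    with bne show False by simp
  qed
  have cK: "(0::real) \<le> of_int \<lceil>K\<rceil>" using K0 le_of_int_ceiling[of K] by linarith
  have n0: "n \<ge> 12" unfolding n_def using cK by simp
  define m0 where "m0 = n + r i0"
  define A where "A = (\<lambda>i. b $ i * (of_int (n + r i + m0) * \<kappa> (r i - r i0)))"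
  define W where "W = of_int (m0 * (m0\<^sup>2 - 1)) / (12::real)"
  have Ei: "(\<Sum>i\<in>UNIV. A i) + b $ i0 * W = 0"
  proof -
    have iff: "\<And>i. (n + r i = - (- m0)) = (i = i0)" using r_inj m0_def by auto
    have "\<And>i. b $ i * \<theta> (lie_bracket (L (n + r i)) (L (- m0)) p) = A i + (if i = i0 then b $ i0 * W else 0)"
    proof -
      fix i
      show "b $ i * \<theta> (lie_bracket (L (n + r i)) (L (- m0)) p) = A i + (if i = i0 then b $ i0 * W else 0)"
      proof (cases "i = i0")
        case True
        then show ?thesis unfolding bL A_def W_def by (simp add: m0_def distrib_left)
      next
        case False
        then have "n + r i \<noteq> - (- m0)" using iff by blast
        then show ?thesis unfolding bL A_def W_def using False
          by (simp add: m0_def)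
      qed
    qed
    then have "(\<Sum>i\<in>UNIV. b $ i * \<theta> (lie_bracket (L (n + r i)) (L (- m0)) p))
             = (\<Sum>i\<in>UNIV. A i) + b $ i0 * W"
      by (simp add: sum.distrib)
    then show ?thesis using E[of "- m0"] by simp
  qed
  have Abound: "\<And>i. \<bar>A i\<bar> \<le> \<bar>b $ i0\<bar> * ((2 * of_int n + 12) * K)"
  proof -
    fix i
    have ri: "0 \<le> r i \<and> r i \<le> 6" "0 \<le> r i0 \<and> r i0 \<le> 6" using r_range by auto
    have "\<bar>A i\<bar> = \<bar>b $ i\<bar> * (of_int (n + r i + m0) * \<bar>\<kappa> (r i - r i0)\<bar>)"
      unfolding A_def using ri n0 m0_def by (simp add: abs_mult)
    also have "\<dots> \<le> \<bar>b $ i0\<bar> * ((2 * of_int n + 12) * K)"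
    proof (rule mult_mono)
      show "of_int (n + r i + m0) * \<bar>\<kappa> (r i - r i0)\<bar> \<le> (2 * of_int n + 12) * K"
      proof (rule mult_mono)
        show "real_of_int (n + r i + m0) \<le> 2 * real_of_int n + 12" using ri m0_def by simp
        show "\<bar>\<kappa> (r i - r i0)\<bar> \<le> K" using ri by (intro Kb) auto
      qed (use n0 ri m0_def in auto)
    qed (use i0 K0 n0 ri m0_def in \<open>auto intro!: mult_nonneg_nonneg\<close>)
    finally show "\<bar>A i\<bar> \<le> \<bar>b $ i0\<bar> * ((2 * of_int n + 12) * K)" .
  qed
  have "\<bar>\<Sum>i\<in>UNIV. A i\<bar> \<le> (\<Sum>i\<in>UNIV. \<bar>A i\<bar>)" by (rule sum_abs)
  also have "\<dots> \<le> (\<Sum>i\<in>(UNIV::7 set). \<bar>b $ i0\<bar> * ((2 * of_int n + 12) * K))"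
    by (rule sum_mono) (rule Abound)
  also have "\<dots> = 7 * (\<bar>b $ i0\<bar> * ((2 * of_int n + 12) * K))" by simp
  finally have sb: "\<bar>\<Sum>i\<in>UNIV. A i\<bar> \<le> 7 * (\<bar>b $ i0\<bar> * ((2 * of_int n + 12) * K))" .
  have m0ge: "m0 \<ge> n" using r_range m0_def by (simp add: add_increasing2)
  have W0: "W \<ge> 0"
  proof -
    have "m0 \<ge> 12" using m0ge n0 by simp
    then have "m0 * m0 \<ge> 12 * m0" by (simp add: mult_right_mono)
    then have "m0\<^sup>2 - 1 \<ge> 0" using \<open>m0 \<ge> 12\<close> by (simp add: power2_eq_square)
    then have "m0 * (m0\<^sup>2 - 1) \<ge> 0" using \<open>m0 \<ge> 12\<close> by simp
    then show ?thesis unfolding W_def by (metis divide_nonneg_pos of_int_0_le_iff zero_less_numeral)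
  qed
  have "(\<Sum>i\<in>UNIV. A i) = - (b $ i0 * W)" using Ei by linarith
  then have "\<bar>\<Sum>i\<in>UNIV. A i\<bar> = \<bar>b $ i0\<bar> * W" using W0 by (simp add: abs_mult)
  moreover have "7 * (\<bar>b $ i0\<bar> * ((2 * of_int n + 12) * K)) = \<bar>b $ i0\<bar> * (7 * ((2 * of_int n + 12) * K))"
    by (rule mult.left_commute)
  ultimately have "\<bar>b $ i0\<bar> * W \<le> \<bar>b $ i0\<bar> * (7 * ((2 * of_int n + 12) * K))" using sb by linarith
  then have Wle: "W \<le> 7 * ((2 * of_int n + 12) * K)" using bpos by (simp add: mult_le_cancel_left)
  show False
  proof (rule final_arith[of K "of_int n" "of_int m0"])
    show "0 \<le> K" by (rule K0)
    show "504 * K + 12 \<le> real_of_int n" unfolding n_def using K0 le_of_int_ceiling[of K]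
      by simp
    show "real_of_int n \<le> real_of_int m0" using m0ge by simp
    show "real_of_int m0 * ((real_of_int m0)\<^sup>2 - 1) / 12 \<le> 7 * (2 * real_of_int n + 12) * K"
    proof -
      have hW: "real_of_int m0 * ((real_of_int m0)\<^sup>2 - 1) / 12 = W" unfolding W_def by simp
      have "7 * (2 * real_of_int n + 12) * K = 7 * ((2 * real_of_int n + 12) * K)" by (rule mult.assoc)
      then show ?thesis using hW Wle by linarith
    qed
  qed
qed

end
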